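(* Let $G=(V,E)$ be a directed graph on $n$ vertices in which every vertex has at least one out-neighbor, accessible only through Jump and RandomCrawl queries, let $\alpha\in(0,1)$ be a fixed constant (the teleportation probability), and let $1\le \Delta\le n$. Then the running time (number of queries plus all computation) of the algorithm ApproximatePageRank described below, run on $G$ with threshold $\Delta$, is at most $\tilde{O}(n/\Delta)$, where $\tilde{O}$ hides factors polylogarithmic in $n$ and the dependence on $\alpha$ is ignored.
   Context: Query model: a Jump query takes no input and returns a vertex of $G$ chosen uniformly at random; a RandomCrawl query takes a vertex $v$ and returns an out-neighbor of $v$ chosen uniformly at random. All logarithms are base 2. Subroutine ApproxRow$(v,\epsilon,\rho)$ (with $0<\epsilon,\rho<1$): set $\ell=\log_{1/(1-\alpha)}(4/\epsilon)$ and $r=16\log(n)/(\epsilon\rho^2)$. Repeat $r$ times: run a walk starting at $v$ in which at each step, with probability $\alpha$ the walk makes a termination step (and stops), and with probability $1-\alpha$ it moves to RandomCrawl of its current vertex; the walk is artificially stopped after $\ell$ steps if it has not terminated. If the walk made a termination step while at vertex $u$, add 1 to a counter of $u$ (stored in a binary search tree keyed by vertex identity). Output every vertex with a nonzero counter together with its counter divided by $r$ (its estimated value). Algorithm ApproximatePageRank (input $\Delta$): maintain a binary search tree ChunkTree of counters keyed by pairs (vertex, scale). For $t=0,1,\dots,\log(4n/\Delta)$: set $\epsilon_t=2^{-t}$; repeat $4\,\epsilon_t (n/\Delta)\log^2(n)$ times: Jump to a random vertex $v$, call ApproxRow$(v,\epsilon_t/2,1/2)$, and for each vertex $j$ in the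 returned list (whose estimated value lies in the chunk of scale $\epsilon_t$, i.e. in $[\epsilon_t,2\epsilon_t)$) add 1 to the counter with key $(j,\epsilon_t)$, creating it with value 1 if absent. Second part: for every key $(j,\epsilon)$ in ChunkTree whose counter value is at least $\tfrac12\log n$, add $\frac{\Delta}{2\epsilon\log^2(n)}$ to an accumulator of $j$ (stored in a binary search tree keyed by vertex). Finally output every vertex whose accumulator is at least $\Delta/4$, together with its accumulated value. *)

theory Defs
  imports Complex_Main
begin

(* A graph on vertices {0..<n} is given by an out-neighbour list
   function  out :: nat => nat list.  Randomness is an infinite sequence
   rs :: nat => real of samples from [0,1); each random decision consumes one sample:
     - Jump:             vertex  nat (floor (u * n))
     - RandomCrawl v:    out v ! nat (floor (u * length (out v)))
     - termination coin: terminate iff u < alpha.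
   Every query / coin / elementary step costs 1; every operation on a balanced
   binary search tree of current size s costs bst_op_cost s.
   Trees are represented (semantically) by association lists. *)

definition bst_op_cost :: "nat \<Rightarrow> nat" where
  "bst_op_cost s = nat \<lceil>log 2 (real s + 2)\<rceil>"

fun incr :: "'k \<Rightarrow> ('k \<times> nat) list \<Rightarrow> ('k \<times> nat) list" where
  "incr k [] = [(k, 1)]"
| "incr k ((k', c) # xs) = (if k = k' then (k', c + 1) # xs else (k', c) # incr k xs)"

fun addto :: "'k \<Rightarrow> real \<Rightarrow> ('k \<times> real) list \<Rightarrow> ('k \<times> real) list" where
  "addto k x [] = [(k, x)]"
| "addto k x ((k', y) # xs) = (if k = k' then (k', y + x) # xs else (k', y) # addto k x xs)"

definition jump :: "nat \<Rightarrow> real \<Rightarrow> nat" where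
  "jump n u = nat \<lfloor>u * real n\<rfloor>"

definition crawl :: "(nat \<Rightarrow> nat list) \<Rightarrow> nat \<Rightarrow> real \<Rightarrow> nat" where
  "crawl out v u = out v ! nat \<lfloor>u * real (length (out v))\<rfloor>"

(* one truncated walk with k steps left: result = (vertex where termination step happened, cost, next position) *)
fun walk :: "(nat \<Rightarrow> nat list) \<Rightarrow> real \<Rightarrow> (nat \<Rightarrow> real) \<Rightarrow> nat \<Rightarrow> nat \<Rightarrow> nat
              \<Rightarrow> nat option \<times> nat \<times> nat" where
  "walk out \<alpha> rs 0 v p = (None, 1, p)"
| "walk out \<alpha> rs (Suc k) v p =
     (if rs p < \<alpha> then (Some v, 1, Suc p)
      else (let u = crawl out v (rs (Suc p));
                (res, c, p') = walk out \<alpha> rs k u (p + 2)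
            in (res, c + 2, p')))"

fun row_loop :: "(nat \<Rightarrow> nat list) \<Rightarrow> real \<Rightarrow> (nat \<Rightarrow> real) \<Rightarrow> nat \<Rightarrow> nat \<Rightarrow> nat
                  \<Rightarrow> (nat \<times> nat) list \<Rightarrow> nat \<Rightarrow> (nat \<times> nat) list \<times> nat \<times> nat" where
  "row_loop out \<alpha> rs len v 0 T p = (T, 1, p)"
| "row_loop out \<alpha> rs len v (Suc j) T p =
     (let (res, c, p1) = walk out \<alpha> rs len v p;
          (T1, c1) = (case res of None \<Rightarrow> (T, 0)
                                | Some u \<Rightarrow> (incr u T, bst_op_cost (length T)));
          (T2, c2, p2) = row_loop out \<alpha> rs len v j T1 p1
      in (T2, c + c1 + c2 + 1, p2))"

definition row_len :: "real \<Rightarrow> real \<Rightarrow> nat" where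
  "row_len \<alpha> \<epsilon> = nat \<lceil>log (1 / (1 - \<alpha>)) (4 / \<epsilon>)\<rceil>"

definition row_reps :: "nat \<Rightarrow> real \<Rightarrow> real \<Rightarrow> nat" where
  "row_reps n \<epsilon> \<rho> = nat \<lceil>16 * log 2 (real n) / (\<epsilon> * \<rho>\<^sup>2)\<rceil>"

definition approx_row :: "(nat \<Rightarrow> nat list) \<Rightarrow> nat \<Rightarrow> real \<Rightarrow> (nat \<Rightarrow> real) \<Rightarrow> nat
                          \<Rightarrow> real \<Rightarrow> real \<Rightarrow> nat \<Rightarrow> (nat \<times> real) list \<times> nat \<times> nat" where
  "approx_row out n \<alpha> rs v \<epsilon> \<rho> p =
     (let len = row_len \<alpha> \<epsilon>; r = row_reps n \<epsilon> \<rho>;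
          (T, c, p') = row_loop out \<alpha> rs len v r [] p
      in (map (\<lambda>(u, k). (u, real k / real r)) T, c + length T + 1, p'))"

(* ChunkTree keyed by (vertex, t), representing the pair (vertex, scale eps_t = 2^-t) *)
fun add_chunks :: "nat \<Rightarrow> real \<Rightarrow> (nat \<times> real) list \<Rightarrow> ((nat \<times> nat) \<times> nat) list
                    \<Rightarrow> ((nat \<times> nat) \<times> nat) list \<times> nat" where
  "add_chunks t \<epsilon> [] CT = (CT, 1)"
| "add_chunks t \<epsilon> ((j, x) # L) CT =
     (let (CT1, c1) = (if \<epsilon> \<le> x \<and> x < 2 * \<epsilon>
                        then (incr (j, t) CT, bst_op_cost (length CT)) else (CT, 0));
          (CT2, c2) = add_chunks t \<epsilon> L CT1
      in (CT2, 1 + c1 + c2))"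

fun chunk_loop :: "(nat \<Rightarrow> nat list) \<Rightarrow> nat \<Rightarrow> real \<Rightarrow> (nat \<Rightarrow> real) \<Rightarrow> nat \<Rightarrow> nat
                    \<Rightarrow> ((nat \<times> nat) \<times> nat) list \<Rightarrow> nat \<Rightarrow> ((nat \<times> nat) \<times> nat) list \<times> nat \<times> nat" where
  "chunk_loop out n \<alpha> rs t 0 CT p = (CT, 1, p)"
| "chunk_loop out n \<alpha> rs t (Suc m) CT p =
     (let v = jump n (rs p); \<epsilon> = (1/2) ^ t;
          (L, c1, p1) = approx_row out n \<alpha> rs v (\<epsilon> / 2) (1/2) (Suc p);
          (CT2, c2) = add_chunks t \<epsilon> L CT;
          (CT3, c3, p3) = chunk_loop out n \<alpha> rs t m CT2 p1
      in (CT3, 2 + c1 + c2 + c3, p3))"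

definition chunk_reps :: "nat \<Rightarrow> real \<Rightarrow> nat \<Rightarrow> nat" where
  "chunk_reps n \<Delta> t = nat \<lceil>4 * (1/2) ^ t * (real n / \<Delta>) * (log 2 (real n))\<^sup>2\<rceil>"

fun scale_loop :: "(nat \<Rightarrow> nat list) \<Rightarrow> nat \<Rightarrow> real \<Rightarrow> real \<Rightarrow> (nat \<Rightarrow> real) \<Rightarrow> nat \<Rightarrow> nat
                    \<Rightarrow> ((nat \<times> nat) \<times> nat) list \<Rightarrow> nat \<Rightarrow> ((nat \<times> nat) \<times> nat) list \<times> nat \<times> nat" where
  "scale_loop out n \<alpha> \<Delta> rs t 0 CT p = (CT, 1, p)"
| "scale_loop out n \<alpha> \<Delta> rs t (Suc k) CT p =
     (let (CT1, c1, p1) = chunk_loop out n \<alpha> rs t (chunk_reps n \<Delta> t) CT p;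
          (CT2, c2, p2) = scale_loop out n \<alpha> \<Delta> rs (Suc t) k CT1 p1
      in (CT2, c1 + c2 + 1, p2))"

fun accum :: "nat \<Rightarrow> real \<Rightarrow> ((nat \<times> nat) \<times> nat) list \<Rightarrow> (nat \<times> real) list
               \<Rightarrow> (nat \<times> real) list \<times> nat" where
  "accum n \<Delta> [] A = (A, 1)"
| "accum n \<Delta> (((j, t), c) # xs) A =
     (let (A1, c1) = (if real c \<ge> log 2 (real n) / 2
                      then (addto j (\<Delta> / (2 * (1/2) ^ t * (log 2 (real n))\<^sup>2)) A,
                            bst_op_cost (length A))
                      else (A, 0));
          (A2, c2) = accum n \<Delta> xs A1
      in (A2, 1 + c1 + c2))"

definition num_scales :: "nat \<Rightarrow> real \<Rightarrow> nat" where
  "num_scales n \<Delta> = nat \<lfloor>log 2 (4 * real n / \<Delta>)\<rfloor> + 1"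

definition approximate_pagerank :: "(nat \<Rightarrow> nat list) \<Rightarrow> nat \<Rightarrow> real \<Rightarrow> real \<Rightarrow> (nat \<Rightarrow> real)
                                    \<Rightarrow> (nat \<times> real) list \<times> nat" where
  "approximate_pagerank out n \<alpha> \<Delta> rs =
     (let (CT, c1, p) = scale_loop out n \<alpha> \<Delta> rs 0 (num_scales n \<Delta>) [] 0;
          (A, c2) = accum n \<Delta> CT [];
          Out = filter (\<lambda>(j, a). a \<ge> \<Delta> / 4) A
      in (Out, c1 + c2 + length A + 1))"

definition running_time :: "(nat \<Rightarrow> nat list) \<Rightarrow> nat \<Rightarrow> real \<Rightarrow> real \<Rightarrow> (nat \<Rightarrow> real) \<Rightarrow> nat" where
  "running_time out n \<alpha> \<Delta> rs = snd (approximate_pagerank out n \<alpha> \<Delta> rs)"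

end

theory Submission
  imports Defs
begin


lemma len_incr: "length (incr k xs) \<le> Suc (length xs)"
  by (induction xs) auto

lemma len_addto: "length (addto k x xs) \<le> Suc (length xs)"
  by (induction xs) auto

lemma bst_mono: "s \<le> S \<Longrightarrow> bst_op_cost s \<le> bst_op_cost S"
  unfolding bst_op_cost_def by (intro nat_mono ceiling_mono) auto

lemma walk_cost: "fst (snd (walk out \<alpha> rs k v p)) \<le> 2*k+1"
proof (induction k arbitrary: v p)
  case (Suc k)
  show ?case
  proof (cases "rs p < \<alpha>")
    case False
    obtain a b c where "walk out \<alpha> rs k (crawl out v (rs (Suc p))) (p + 2) = (a,b,c)" by (metis prod_cases3)
    with Suc.IH[of "crawl out v (rs (Suc p))" "p+2"] False show ?thesis by simp
  qed simp
qed simp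

lemma row_loop_bound:
  "length (fst (row_loop out \<alpha> rs len v j T p)) \<le> length T + j \<and>
   (length T + j \<le> S \<longrightarrow> fst (snd (row_loop out \<alpha> rs len v j T p)) \<le> j*(2*len+3+bst_op_cost S) + 1)"
proof (induction j arbitrary: T p)
  case 0 then show ?case by simp
next
  case (Suc j)
  obtain res c p1 where w: "walk out \<alpha> rs len v p = (res,c,p1)" by (metis prod_cases3)
  have c: "c \<le> 2*len+1" using walk_cost[of out \<alpha> rs len v p] w by simp
  obtain T1 c1 where t1: "(case res of None \<Rightarrow> (T, 0) | Some u \<Rightarrow> (incr u T, bst_op_cost (length T))) = (T1, c1)"
    by (metis prod.exhaust)
  have lt1: "length T1 \<le> Suc (length T)" and c1: "c1 \<le> bst_op_cost (length T)"
    using t1 len_incr by (auto split: option.splits)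
  obtain T2 c2 p2 where r: "row_loop out \<alpha> rs len v j T1 p1 = (T2,c2,p2)" by (metis prod_cases3)
  have eq: "row_loop out \<alpha> rs len v (Suc j) T p = (T2, c + c1 + c2 + 1, p2)"
    using w t1 r by simp
  have IH: "length T2 \<le> length T1 + j" "length T1 + j \<le> S \<longrightarrow> c2 \<le> j*(2*len+3+bst_op_cost S) + 1"
    using Suc.IH[of T1 p1] r by auto
  show ?case
  proof (intro conjI impI)
    show "length (fst (row_loop out \<alpha> rs len v (Suc j) T p)) \<le> length T + Suc j"
      using eq IH lt1 by simp
  next
    assume S: "length T + Suc j \<le> S"
    have "c1 \<le> bst_op_cost S" using c1 bst_mono[of "length T" S] S by simp
    moreover have "c2 \<le> j*(2*len+3+bst_op_cost S) + 1" using IH lt1 S by simp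
    ultimately show "fst (snd (row_loop out \<alpha> rs len v (Suc j) T p)) \<le> Suc j*(2*len+3+bst_op_cost S) + 1"
      using eq c by simp
  qed
qed

lemma approx_row_bound:
  "length (fst (approx_row out n \<alpha> rs v \<epsilon> \<rho> p)) \<le> row_reps n \<epsilon> \<rho> \<and>
   fst (snd (approx_row out n \<alpha> rs v \<epsilon> \<rho> p)) \<le>
     row_reps n \<epsilon> \<rho> * (2*row_len \<alpha> \<epsilon> + 4 + bst_op_cost (row_reps n \<epsilon> \<rho>)) + 2"
proof -
  obtain T c p' where r: "row_loop out \<alpha> rs (row_len \<alpha> \<epsilon>) v (row_reps n \<epsilon> \<rho>) [] p = (T,c,p')"
    by (metis prod_cases3)
  have "length T \<le> row_reps n \<epsilon> \<rho>"
       "c \<le> row_reps n \<epsilon> \<rho> * (2*row_len \<alpha> \<epsilon>+3+bst_op_cost (row_reps n \<epsilon> \<rho>)) + 1"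
    using row_loop_bound[of out \<alpha> rs "row_len \<alpha> \<epsilon>" v "row_reps n \<epsilon> \<rho>" "[]" p "row_reps n \<epsilon> \<rho>"] r
    by auto
  then show ?thesis using r by (simp add: approx_row_def Let_def algebra_simps)
qed

lemma add_chunks_bound:
  "length (fst (add_chunks t \<epsilon> L CT)) \<le> length CT + length L \<and>
   (length CT + length L \<le> S \<longrightarrow> snd (add_chunks t \<epsilon> L CT) \<le> length L * (1 + bst_op_cost S) + 1)"
proof (induction L arbitrary: CT)
  case Nil then show ?case by simp
next
  case (Cons a L)
  obtain j x where a: "a = (j,x)" by fastforce
  obtain CT1 c1 where t1: "(if \<epsilon> \<le> x \<and> x < 2 * \<epsilon> then (incr (j, t) CT, bst_op_cost (length CT)) else (CT, 0)) = (CT1, c1)"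
    by (metis prod.exhaust)
  have lt1: "length CT1 \<le> Suc (length CT)" and c1: "c1 \<le> bst_op_cost (length CT)"
    using t1 len_incr by (auto split: if_splits)
  obtain CT2 c2 where r: "add_chunks t \<epsilon> L CT1 = (CT2,c2)" by fastforce
  have eq: "add_chunks t \<epsilon> (a#L) CT = (CT2, 1 + c1 + c2)" using a t1 r by simp
  have IH: "length CT2 \<le> length CT1 + length L" "length CT1 + length L \<le> S \<longrightarrow> c2 \<le> length L * (1 + bst_op_cost S) + 1"
    using Cons.IH[of CT1] r by auto
  show ?case
  proof (intro conjI impI)
    show "length (fst (add_chunks t \<epsilon> (a#L) CT)) \<le> length CT + length (a#L)" using eq IH lt1 by simp
  next
    assume S: "length CT + length (a#L) \<le> S"
    have "c1 \<le> bst_op_cost S" using c1 bst_mono[of "length CT" S] S by simp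
    moreover have "c2 \<le> length L * (1 + bst_op_cost S) + 1" using IH lt1 S by simp
    ultimately show "snd (add_chunks t \<epsilon> (a#L) CT) \<le> length (a#L) * (1 + bst_op_cost S) + 1"
      using eq by simp
  qed
qed

lemma accum_bound:
  "length (fst (accum n \<Delta> CT A)) \<le> length A + length CT \<and>
   (length A + length CT \<le> S \<longrightarrow> snd (accum n \<Delta> CT A) \<le> length CT * (1 + bst_op_cost S) + 1)"
proof (induction CT arbitrary: A)
  case Nil then show ?case by simp
next
  case (Cons a L)
  obtain j t c where a: "a = ((j,t),c)" by (metis prod.exhaust)
  obtain A1 c1 where t1: "(if real c \<ge> log 2 (real n) / 2
                      then (addto j (\<Delta> / (2 * (1/2) ^ t * (log 2 (real n))\<^sup>2)) A,
                            bst_op_cost (length A))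
                      else (A, 0)) = (A1, c1)"
    by (metis prod.exhaust)
  have lt1: "length A1 \<le> Suc (length A)" and c1: "c1 \<le> bst_op_cost (length A)"
    using t1 len_addto by (auto split: if_splits)
  obtain A2 c2 where r: "accum n \<Delta> L A1 = (A2,c2)" by fastforce
  have eq: "accum n \<Delta> (a#L) A = (A2, 1 + c1 + c2)" using a t1 r by simp
  have IH: "length A2 \<le> length A1 + length L" "length A1 + length L \<le> S \<longrightarrow> c2 \<le> length L * (1 + bst_op_cost S) + 1"
    using Cons.IH[of A1] r by auto
  show ?case
  proof (intro conjI impI)
    show "length (fst (accum n \<Delta> (a#L) A)) \<le> length A + length (a#L)" using eq IH lt1 by simp
  next
    assume S: "length A + length (a#L) \<le> S"
    have "c1 \<le> bst_op_cost S" using c1 bst_mono[of "length A" S] S by simp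
    moreover have "c2 \<le> length L * (1 + bst_op_cost S) + 1" using IH lt1 S by simp
    ultimately show "snd (accum n \<Delta> (a#L) A) \<le> length (a#L) * (1 + bst_op_cost S) + 1"
      using eq by simp
  qed
qed

abbreviation Rr :: "nat \<Rightarrow> nat \<Rightarrow> nat" where "Rr n t \<equiv> row_reps n ((1/2)^t/2) (1/2)"
abbreviation Ln :: "real \<Rightarrow> nat \<Rightarrow> nat" where "Ln \<alpha> t \<equiv> row_len \<alpha> ((1/2)^t/2)"

lemma chunk_loop_bound:
  "length (fst (chunk_loop out n \<alpha> rs t m CT p)) \<le> length CT + m * Rr n t \<and>
   (length CT + m * Rr n t \<le> S \<longrightarrow> Rr n t \<le> S \<longrightarrow>
     fst (snd (chunk_loop out n \<alpha> rs t m CT p)) \<le> m * (5 + Rr n t * (2 * Ln \<alpha> t + 5 + 2 * bst_op_cost S)) + 1)"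
proof (induction m arbitrary: CT p)
  case 0 then show ?case by simp
next
  case (Suc m)
  define R where "R = Rr n t"
  define v where "v = jump n (rs p)"
  obtain L c1 p1 where a: "approx_row out n \<alpha> rs v ((1/2)^t / 2) (1/2) (Suc p) = (L,c1,p1)"
    by (metis prod_cases3)
  have aL: "length L \<le> R" and ac: "c1 \<le> R * (2 * Ln \<alpha> t + 4 + bst_op_cost R) + 2"
    using approx_row_bound[of out n \<alpha> rs v "(1/2)^t / 2" "1/2" "Suc p"] a unfolding R_def by auto
  obtain CT2 c2 where b: "add_chunks t ((1/2)^t) L CT = (CT2, c2)" by fastforce
  have bL: "length CT2 \<le> length CT + length L"
    and bc: "\<And>S. length CT + length L \<le> S \<Longrightarrow> c2 \<le> length L * (1 + bst_op_cost S) + 1"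
    using add_chunks_bound[of t "(1/2)^t" L CT] b by auto
  obtain CT3 c3 p3 where c: "chunk_loop out n \<alpha> rs t m CT2 p1 = (CT3,c3,p3)" by (metis prod_cases3)
  have eq: "chunk_loop out n \<alpha> rs t (Suc m) CT p = (CT3, 2 + c1 + c2 + c3, p3)"
    using a b c by (simp add: v_def Let_def)
  have IH: "length CT3 \<le> length CT2 + m * R"
    "length CT2 + m * R \<le> S \<longrightarrow> R \<le> S \<longrightarrow> c3 \<le> m * (5 + R * (2 * Ln \<alpha> t + 5 + 2 * bst_op_cost S)) + 1"
    using Suc.IH[of CT2 p1] c unfolding R_def by auto
  show ?case
  proof (intro conjI impI)
    show "length (fst (chunk_loop out n \<alpha> rs t (Suc m) CT p)) \<le> length CT + Suc m * Rr n t"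
      using eq IH bL aL unfolding R_def by simp
  next
    assume S: "length CT + Suc m * Rr n t \<le> S" and RS: "Rr n t \<le> S"
    have b1: "bst_op_cost R \<le> bst_op_cost S" using bst_mono RS R_def by simp
    have "c1 \<le> R * (2 * Ln \<alpha> t + 4 + bst_op_cost S) + 2"
      using ac b1 by (meson add_le_mono le_refl mult_le_mono order_trans)
    moreover have "c2 \<le> R * (1 + bst_op_cost S) + 1"
    proof -
      have "length CT + length L \<le> S" using S aL R_def by simp
      then have "c2 \<le> length L * (1 + bst_op_cost S) + 1" by (rule bc)
      also have "\<dots> \<le> R * (1 + bst_op_cost S) + 1" using aL mult_le_mono1 by (metis add_le_mono1)
      finally show ?thesis .
    qed
    moreover have "c3 \<le> m * (5 + R * (2 * Ln \<alpha> t + 5 + 2 * bst_op_cost S)) + 1"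
      using IH bL aL S RS unfolding R_def by simp
    ultimately show "fst (snd (chunk_loop out n \<alpha> rs t (Suc m) CT p)) \<le> Suc m * (5 + Rr n t * (2 * Ln \<alpha> t + 5 + 2 * bst_op_cost S)) + 1"
      using eq unfolding R_def by (simp add: algebra_simps)
  qed
qed

lemma scale_loop_bound:
  "length (fst (scale_loop out n \<alpha> \<Delta> rs t k CT p)) \<le> length CT + (\<Sum>i<k. chunk_reps n \<Delta> (t+i) * Rr n (t+i)) \<and>
   (length CT + (\<Sum>i<k. chunk_reps n \<Delta> (t+i) * Rr n (t+i)) \<le> S \<longrightarrow> (\<forall>i<k. Rr n (t+i) \<le> S) \<longrightarrow>
     fst (snd (scale_loop out n \<alpha> \<Delta> rs t k CT p)) \<le>
       (\<Sum>i<k. chunk_reps n \<Delta> (t+i) * (5 + Rr n (t+i) * (2 * Ln \<alpha> (t+i) + 5 + 2 * bst_op_cost S)) + 2) + 1)"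
proof (induction k arbitrary: t CT p)
  case 0 then show ?case by simp
next
  case (Suc k)
  obtain CT1 c1 p1 where a: "chunk_loop out n \<alpha> rs t (chunk_reps n \<Delta> t) CT p = (CT1,c1,p1)"
    by (metis prod_cases3)
  have aL: "length CT1 \<le> length CT + chunk_reps n \<Delta> t * Rr n t"
   and ac: "length CT + chunk_reps n \<Delta> t * Rr n t \<le> S \<Longrightarrow> Rr n t \<le> S \<Longrightarrow>
     c1 \<le> chunk_reps n \<Delta> t * (5 + Rr n t * (2 * Ln \<alpha> t + 5 + 2 * bst_op_cost S)) + 1"
    using chunk_loop_bound[of out n \<alpha> rs t "chunk_reps n \<Delta> t" CT p S] a by auto
  obtain CT2 c2 p2 where b: "scale_loop out n \<alpha> \<Delta> rs (Suc t) k CT1 p1 = (CT2,c2,p2)"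
    by (metis prod_cases3)
  have eq: "scale_loop out n \<alpha> \<Delta> rs t (Suc k) CT p = (CT2, c1 + c2 + 1, p2)"
    using a b by simp
  have sh: "\<And>f::nat\<Rightarrow>nat. (\<Sum>i<Suc k. f (t+i)) = f t + (\<Sum>i<k. f (Suc t + i))"
    by (subst sum.lessThan_Suc_shift) simp
  have IH: "length CT2 \<le> length CT1 + (\<Sum>i<k. chunk_reps n \<Delta> (Suc t+i) * Rr n (Suc t+i))"
    "length CT1 + (\<Sum>i<k. chunk_reps n \<Delta> (Suc t+i) * Rr n (Suc t+i)) \<le> S \<longrightarrow> (\<forall>i<k. Rr n (Suc t+i) \<le> S) \<longrightarrow>
     c2 \<le> (\<Sum>i<k. chunk_reps n \<Delta> (Suc t+i) * (5 + Rr n (Suc t+i) * (2 * Ln \<alpha> (Suc t+i) + 5 + 2 * bst_op_cost S)) + 2) + 1"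
    using Suc.IH[of "Suc t" CT1 p1] b by auto
  show ?case
  proof (intro conjI impI)
    show "length (fst (scale_loop out n \<alpha> \<Delta> rs t (Suc k) CT p)) \<le> length CT + (\<Sum>i<Suc k. chunk_reps n \<Delta> (t+i) * Rr n (t+i))"
      using eq IH aL by (simp only: sh[of "\<lambda>x. chunk_reps n \<Delta> x * Rr n x"]) simp
  next
    assume S: "length CT + (\<Sum>i<Suc k. chunk_reps n \<Delta> (t+i) * Rr n (t+i)) \<le> S"
      and RS: "\<forall>i<Suc k. Rr n (t+i) \<le> S"
    have S': "length CT + (chunk_reps n \<Delta> t * Rr n t + (\<Sum>i<k. chunk_reps n \<Delta> (Suc t+i) * Rr n (Suc t+i))) \<le> S"
      using S by (simp only: sh[of "\<lambda>x. chunk_reps n \<Delta> x * Rr n x"])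
    have R0: "Rr n t \<le> S" using RS[rule_format, of 0] by simp
    have R1: "\<forall>i<k. Rr n (Suc t+i) \<le> S" using RS by (metis Suc_less_eq add_Suc add_Suc_right)
    have "c1 \<le> chunk_reps n \<Delta> t * (5 + Rr n t * (2 * Ln \<alpha> t + 5 + 2 * bst_op_cost S)) + 1"
      using ac S' R0 by simp
    moreover have "c2 \<le> (\<Sum>i<k. chunk_reps n \<Delta> (Suc t+i) * (5 + Rr n (Suc t+i) * (2 * Ln \<alpha> (Suc t+i) + 5 + 2 * bst_op_cost S)) + 2) + 1"
      using IH aL S' R1 by simp
    ultimately show "fst (snd (scale_loop out n \<alpha> \<Delta> rs t (Suc k) CT p)) \<le>
       (\<Sum>i<Suc k. chunk_reps n \<Delta> (t+i) * (5 + Rr n (t+i) * (2 * Ln \<alpha> (t+i) + 5 + 2 * bst_op_cost S)) + 2) + 1"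
      using eq by (simp only: sh[of "\<lambda>x. chunk_reps n \<Delta> x * (5 + Rr n x * (2 * Ln \<alpha> x + 5 + 2 * bst_op_cost S)) + 2"]) simp
  qed
qed

lemma rt_nat_bound:
  fixes n :: nat and \<Delta> :: real
  defines "N \<equiv> num_scales n \<Delta>"
  defines "Tot \<equiv> (\<Sum>i<N. chunk_reps n \<Delta> i * Rr n i)"
  defines "bS \<equiv> bst_op_cost (Tot + (\<Sum>i<N. Rr n i))"
  shows "running_time out n \<alpha> \<Delta> rs \<le>
     (\<Sum>i<N. chunk_reps n \<Delta> i * (5 + Rr n i * (2 * Ln \<alpha> i + 5 + 2 * bS)) + 2) + Tot * (2 + bS) + 4"
proof -
  define S where "S = Tot + (\<Sum>i<N. Rr n i)"
  obtain CT c1 p where a: "scale_loop out n \<alpha> \<Delta> rs 0 N [] 0 = (CT,c1,p)" by (metis prod_cases3)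
  have RS: "\<forall>i<N. Rr n (0+i) \<le> S"
    unfolding S_def using member_le_sum[of _ "{..<N}" "Rr n"] by (simp add: trans_le_add2)
  have lc: "length CT \<le> Tot" and c1b: "c1 \<le> (\<Sum>i<N. chunk_reps n \<Delta> i * (5 + Rr n i * (2 * Ln \<alpha> i + 5 + 2 * bS)) + 2) + 1"
    using scale_loop_bound[of out n \<alpha> \<Delta> rs 0 N "[]" 0 S] a RS unfolding Tot_def bS_def S_def by auto
  moreover obtain A c2 where b: "accum n \<Delta> CT [] = (A,c2)" by fastforce
  moreover have "length CT \<le> S" using calculation(1) S_def by simp
  ultimately have ab: "length A \<le> Tot" "c2 \<le> Tot * (1 + bS) + 1"
    using accum_bound[of n \<Delta> CT "[]" S] unfolding bS_def S_def[symmetric]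
    apply auto
  proof -
    assume h: "length CT \<le> Tot" "c2 \<le> Suc (length CT + length CT * bst_op_cost S)"
    have "length CT * bst_op_cost S \<le> Tot * bst_op_cost S" using h(1) by (rule mult_le_mono1)
    then show "c2 \<le> Suc (Tot + Tot * bst_op_cost S)" using h by linarith
  qed
  moreover have "running_time out n \<alpha> \<Delta> rs = c1 + c2 + length A + 1"
    using a b by (simp add: running_time_def approximate_pagerank_def N_def Let_def)
  ultimately show ?thesis using ab c1b by (simp add: algebra_simps)
qed



lemma log2_4: "log 2 (4::real) = 2"
proof -
  have "log 2 (4::real) = log 2 (2^2)" by simp
  also have "\<dots> = 2" by (subst log_nat_power) auto
  finally show ?thesis .
qed

lemma log2_32: "log 2 (32::real) = 5"
proof -
  have "log 2 (32::real) = log 2 (2^5)" by simp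
  also have "\<dots> = 5" by (subst log_nat_power) auto
  finally show ?thesis .
qed

lemma num_scales_le:
  assumes n: "1 \<le> real n" and D: "1 \<le> \<Delta>" "\<Delta> \<le> real n"
  shows "real (num_scales n \<Delta>) \<le> 3 + log 2 (real n)"
proof -
  have x: "4 \<le> 4 * real n / \<Delta>" using D by (simp add: field_simps)
  have "log 2 (4 * real n / \<Delta>) \<le> log 2 (4 * real n)"
    using D n by (intro log_mono) (auto simp: field_simps)
  also have "\<dots> = 2 + log 2 (real n)" using n by (simp add: log_mult log2_4)
  finally have l: "log 2 (4 * real n / \<Delta>) \<le> 2 + log 2 (real n)" .
  have "0 \<le> log 2 (4 * real n / \<Delta>)" using x by simp
  then have "real (nat \<lfloor>log 2 (4 * real n / \<Delta>)\<rfloor>) \<le> log 2 (4 * real n / \<Delta>)" by simp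
  then show ?thesis using l unfolding num_scales_def by simp
qed

lemma pow_scale:
  assumes D: "1 \<le> \<Delta>" "\<Delta> \<le> real n" and i: "i < num_scales n \<Delta>"
  shows "(2::real) ^ i \<le> 4 * (real n / \<Delta>)"
proof -
  have x: "4 \<le> 4 * real n / \<Delta>" using D by (simp add: field_simps)
  have "real i \<le> real (nat \<lfloor>log 2 (4 * real n / \<Delta>)\<rfloor>)" using i unfolding num_scales_def by simp
  also have "\<dots> \<le> log 2 (4 * real n / \<Delta>)" using x by simp
  finally have "(2::real) powr real i \<le> 2 powr log 2 (4 * real n / \<Delta>)" by simp
  also have "\<dots> = 4 * real n / \<Delta>" using x by simp
  finally show ?thesis by (simp add: powr_realpow)
qed

lemma chunk_reps_le:
  assumes "1 \<le> \<Delta>"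
  shows "real (chunk_reps n \<Delta> i) \<le> 4 * (1/2)^i * (real n / \<Delta>) * (log 2 (real n))\<^sup>2 + 1"
proof -
  have "0 \<le> 4 * (1/2::real)^i * (real n / \<Delta>) * (log 2 (real n))\<^sup>2" using assms by simp
  then show ?thesis unfolding chunk_reps_def by linarith
qed

lemma row_reps_le:
  assumes "1 \<le> real n"
  shows "real (row_reps n ((1/2)^i/2) (1/2)) \<le> 128 * log 2 (real n) * 2^i + 1"
proof -
  have e: "16 * log 2 (real n) / ((1/2)^i/2 * (1/2)\<^sup>2) = 128 * log 2 (real n) * 2^i"
    by (simp add: power_one_over field_simps)
  have "0 \<le> 128 * log 2 (real n) * 2^i" using assms by simp
  then show ?thesis unfolding row_reps_def e by linarith
qed

lemma row_len_le:
  assumes a: "0 < \<alpha>" "\<alpha> < 1" and n: "1 \<le> real n" and p: "(2::real)^i \<le> 4 * real n"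
  shows "real (row_len \<alpha> ((1/2)^i/2)) \<le> (5 + log 2 (real n)) / log 2 (1/(1-\<alpha>)) + 1"
proof -
  define b where "b = 1/(1-\<alpha>)"
  have b1: "1 < b" using a by (simp add: b_def field_simps)
  have e: "4 / ((1/2::real)^i/2) = 8 * 2^i" by (simp add: power_one_over field_simps)
  have pos: "0 < (8::real) * 2^i" by simp
  have "log b (8 * 2^i) \<le> log b (32 * real n)"
    using b1 p pos n by (subst log_le_cancel_iff) auto
  also have "\<dots> = log 2 (32 * real n) / log 2 b" using n by (simp add: log_base_change)
  also have "log 2 (32 * real n) = 5 + log 2 (real n)" using n by (simp add: log_mult log2_32)
  finally have l: "log b (8 * 2^i) \<le> (5 + log 2 (real n)) / log 2 b" .
  have "1 \<le> (2::real)^i" by simp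
  then have "1 \<le> (8::real) * 2^i" by linarith
  then have "0 \<le> log b (8 * 2^i)" using b1 pos by (subst zero_le_log_cancel_iff) auto
  then have "real (nat \<lceil>log b (8 * 2^i)\<rceil>) \<le> log b (8 * 2^i) + 1" by linarith
  then show ?thesis using l unfolding row_len_def e b_def[symmetric] by simp
qed



lemma div_le_self_real: "0 \<le> (a::real) \<Longrightarrow> 1 \<le> y \<Longrightarrow> a / y \<le> a"
proof -
  assume a: "0 \<le> a" and y: "1 \<le> y"
  have "a * 1 \<le> a * y" using a y by (intro mult_left_mono) auto
  then show ?thesis using y by (simp add: pos_divide_le_eq)
qed

lemma prod_bound:
  fixes L x y m r :: real
  assumes L: "0\<le>L" and x: "1\<le>x" and y: "1\<le>y" "y \<le> 4*x" and m: "0\<le>m" "m \<le> 4*(1/y)*x*L^2+1"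
    and r: "0\<le>r" "r \<le> 128*L*y+1"
  shows "m*r \<le> 1029*x*(1+L)^3"
proof -
  have "m*r \<le> (4*(1/y)*x*L^2+1)*(128*L*y+1)"
    using m r by (intro mult_mono) auto
  also have "\<dots> = 512*x*L^3 + 4*x*L^2/y + 128*L*y + 1"
    using y by (simp add: field_simps power2_eq_square power3_eq_cube)
  also have "\<dots> \<le> 512*x*(1+L)^3 + 4*x*(1+L)^3 + 512*x*(1+L)^3 + x*(1+L)^3"
  proof -
    have B1: "1 \<le> (1+L)^3" using L by simp
    have "L^3 \<le> (1+L)^3" using L by (intro power_mono) auto
    then have a: "512*x*L^3 \<le> 512*x*(1+L)^3" using x by simp
    have "L^2 \<le> (1+L)^2" using L by (intro power_mono) auto
    also have "(1+L)^2 \<le> (1+L)^3" using L by (intro power_increasing) auto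
    finally have "L^2 \<le> (1+L)^3" .
    moreover have "4*x*L^2/y \<le> 4*x*L^2" using y L x by (intro div_le_self_real) auto
    ultimately have b: "4*x*L^2/y \<le> 4*x*(1+L)^3"
    proof -
      assume h: "L^2 \<le> (1+L)^3" "4*x*L^2/y \<le> 4*x*L^2"
      have "4*x*L^2 \<le> 4*x*(1+L)^3" using h(1) x by (intro mult_left_mono) auto
      then show ?thesis using h(2) by linarith
    qed
    have "L \<le> 1 + L" by simp
    also have "\<dots> = (1+L)^1" by simp
    also have "\<dots> \<le> (1+L)^3" using L by (intro power_increasing) auto
    finally have L3: "L \<le> (1+L)^3" .
    have "128*L*y \<le> 128*L*(4*x)" using y L by (intro mult_left_mono) auto
    also have "\<dots> = 512*x*L" by simp
    also have "\<dots> \<le> 512*x*(1+L)^3" using L3 x by (intro mult_left_mono) auto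
    finally have "128*L*y \<le> 512*x*(1+L)^3" .
    moreover have "1 \<le> x*(1+L)^3"
    proof -
      have "1*1 \<le> x*(1+L)^3" using x B1 by (intro mult_mono) auto
      then show ?thesis by simp
    qed
    ultimately show ?thesis using a b by linarith
  qed
  finally show ?thesis by simp
qed



lemma log2_le_2n: assumes "1 \<le> (y::real)" shows "log 2 y \<le> 2*y - 2"
proof -
  have l2: "1/2 \<le> ln (2::real)" using ln_add1_ge[of 1] by simp
  have "ln y \<le> y - 1" using assms ln_le_minus_one by simp
  moreover have "0 \<le> ln y" using assms by simp
  ultimately have "ln y / ln 2 \<le> (y - 1) / (1/2)" using l2
    by (intro frac_le) auto
  then show ?thesis by (simp add: log_def)
qed

lemma fin_step:
  fixes rt SS T bR P x B :: real
  assumes "rt \<le> SS + T*(2+bR) + 4" "SS \<le> 3*P*x*B^5" "T*(2+bR) \<le> 61740*x*B^5" "1 \<le> x*B^5"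
  shows "rt \<le> (3*P + 61744)*x*B^5"
proof -
  have eq: "(3*P + 61744)*x*B^5 = 3*P*x*B^5 + 61740*x*B^5 + 4*(x*B^5)" by (simp add: algebra_simps)
  show ?thesis using assms unfolding eq by linarith
qed

theorem theorem1:
  fixes \<alpha> :: real
  assumes "0 < \<alpha>" and "\<alpha> < 1"
  shows "\<exists>C k. \<forall>(n::nat) (out :: nat \<Rightarrow> nat list) (\<Delta>::real) (rs :: nat \<Rightarrow> real).
           (\<forall>v<n. out v \<noteq> [] \<and> set (out v) \<subseteq> {..<n}) \<longrightarrow>
           1 \<le> \<Delta> \<longrightarrow> \<Delta> \<le> real n \<longrightarrow>
           (\<forall>i. 0 \<le> rs i \<and> rs i < 1) \<longrightarrow>
           real (running_time out n \<alpha> \<Delta> rs) \<le> C * (real n / \<Delta>) * (1 + log 2 (real n)) ^ k"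
proof -
  define lb where "lb = log 2 (1/(1-\<alpha>))"
  have lb: "0 < lb" unfolding lb_def using assms by (simp add: field_simps)
  define K where "K = 5/lb + 1"
  have K0: "0 \<le> K" using lb by (simp add: K_def)
  define P where "P = 27 + 1029*(2*K+41)"
  show ?thesis
  proof (intro exI allI impI)
    fix n :: nat and out :: "nat \<Rightarrow> nat list" and \<Delta> :: real and rs :: "nat \<Rightarrow> real"
    assume D1: "1 \<le> \<Delta>" and D2: "\<Delta> \<le> real n"
    define L where "L = log 2 (real n)"
    define B where "B = 1 + L"
    define x where "x = real n / \<Delta>"
    define N where "N = num_scales n \<Delta>"
    define Tot where "Tot = (\<Sum>i<N. chunk_reps n \<Delta> i * Rr n i)"
    define bS where "bS = bst_op_cost (Tot + (\<Sum>i<N. Rr n i))"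
    have n1: "1 \<le> real n" using D1 D2 by simp
    have L0: "0 \<le> L" using n1 by (simp add: L_def)
    have B1: "1 \<le> B" using L0 by (simp add: B_def)
    have x1: "1 \<le> x" using D1 D2 by (simp add: x_def field_simps)
    have xn: "x \<le> real n" using D1 D2 n1 by (simp add: x_def field_simps)
    have B2n: "B \<le> 2 * real n" using log2_le_2n[OF n1] by (simp add: B_def L_def)
    have NB: "real N \<le> 3*B" using num_scales_le[OF n1 D1 D2] L0 by (simp add: N_def B_def L_def)
    have per: "real (chunk_reps n \<Delta> i) \<le> 5*x*B^2 \<and>
               real (chunk_reps n \<Delta> i) * real (Rr n i) \<le> 1029*x*B^3 \<and>
               real (Rr n i) \<le> 513*x*B \<and> real (Ln \<alpha> i) \<le> K*B" if i: "i < N" for i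
    proof -
      define y :: real where "y = 2^i"
      have y1: "1 \<le> y" by (simp add: y_def)
      have y4: "y \<le> 4*x" using pow_scale[OF D1 D2] i by (simp add: y_def x_def N_def)
      have hm: "real (chunk_reps n \<Delta> i) \<le> 4*(1/y)*x*L^2+1"
        using chunk_reps_le[OF D1, of n i] by (simp add: y_def x_def L_def power_one_over)
      have hr: "real (Rr n i) \<le> 128*L*y+1"
        using row_reps_le[OF n1, of i] by (simp add: y_def L_def)
      have "real (chunk_reps n \<Delta> i) * real (Rr n i) \<le> 1029*x*B^3"
        using prod_bound[OF L0 x1 y1 y4 _ hm _ hr] by (simp add: B_def)
      moreover have "real (chunk_reps n \<Delta> i) \<le> 5*x*B^2"
      proof -
        have "4*x*L^2/y \<le> 4*x*L^2" using y1 x1 by (intro div_le_self_real) auto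
        then have "4*(1/y)*x*L^2 \<le> 4*x*L^2" by simp
        moreover have "L^2 \<le> B^2" using L0 by (simp add: B_def power_mono)
        moreover have "1 \<le> x*B^2"
        proof -
          have "1 \<le> B^2" using B1 by simp
          then have "1*1 \<le> x*B^2" using x1 by (intro mult_mono) auto
          then show ?thesis by simp
        qed
        ultimately show ?thesis
        proof -
          assume h: "4*(1/y)*x*L^2 \<le> 4*x*L^2" "L^2 \<le> B^2" "1 \<le> x*B^2"
          have "4*x*L^2 \<le> 4*x*B^2" using h(2) x1 by (intro mult_left_mono) auto
          then show ?thesis using h hm by linarith
        qed
      qed
      moreover have "real (Rr n i) \<le> 513*x*B"
      proof -
        have "128*L*y \<le> 128*L*(4*x)" using y4 L0 by (intro mult_left_mono) auto
        also have "\<dots> = 512*x*L" by simp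
        also have "\<dots> \<le> 512*x*B" using x1 by (intro mult_left_mono) (auto simp: B_def)
        finally have "128*L*y \<le> 512*x*B" .
        moreover have "1 \<le> x*B"
        proof -
          have "1*1 \<le> x*B" using x1 B1 by (intro mult_mono) auto
          then show ?thesis by simp
        qed
        ultimately show ?thesis using hr by linarith
      qed
      moreover have "real (Ln \<alpha> i) \<le> K*B"
      proof -
        have "y \<le> 4 * real n" using y4 xn by linarith
        then have "real (Ln \<alpha> i) \<le> (5 + L)/lb + 1" using row_len_le[OF assms n1, of i]
          by (simp add: y_def L_def lb_def)
        also have "\<dots> \<le> K*B" using lb L0
          by (simp add: K_def B_def field_simps)
        finally show ?thesis .
      qed
      ultimately show ?thesis by blast
    qed
    show "real (running_time out n \<alpha> \<Delta> rs) \<le> (3*P + 61744) * (real n / \<Delta>) * (1 + log 2 (real n)) ^ 5"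
    proof -
      define bR where "bR = real bS"
      have rt0: "running_time out n \<alpha> \<Delta> rs \<le>
        (\<Sum>i<N. chunk_reps n \<Delta> i * (5 + Rr n i * (2 * Ln \<alpha> i + 5 + 2 * bS)) + 2) + Tot * (2 + bS) + 4"
        using rt_nat_bound[where n=n and \<Delta>=\<Delta> and out=out and \<alpha>=\<alpha> and rs=rs] unfolding N_def Tot_def bS_def by simp
      have rt: "real (running_time out n \<alpha> \<Delta> rs) \<le>
        (\<Sum>i<N. real (chunk_reps n \<Delta> i) * (5 + real (Rr n i) * (2 * real (Ln \<alpha> i) + 5 + 2 * bR)) + 2) + real Tot * (2 + bR) + 4"
        using of_nat_mono[OF rt0, where 'a=real] unfolding bR_def by (simp only: of_nat_add of_nat_mult of_nat_sum of_nat_numeral)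
      have B4: "B^2 \<le> B^4" "B^3 \<le> B^4" "B^4 \<le> B^5" using B1 by (auto intro: power_increasing)
      have xB4: "1 \<le> x*B^4"
      proof -
        have "1 \<le> B^4" using B1 by simp
        then have "1*1 \<le> x*B^4" using x1 by (intro mult_mono) auto
        then show ?thesis by simp
      qed
      have xB5: "1 \<le> x*B^5"
      proof -
        have "1 \<le> B^5" using B1 by simp
        then have "1*1 \<le> x*B^5" using x1 by (intro mult_mono) auto
        then show ?thesis by simp
      qed
      have TotB: "real Tot \<le> 3087*x*B^4"
      proof -
        have "real Tot = (\<Sum>i<N. real (chunk_reps n \<Delta> i) * real (Rr n i))" by (simp add: Tot_def of_nat_sum)
        also have "\<dots> \<le> real (card {..<N}) * (1029*x*B^3)"
          by (rule sum_bounded_above) (use per in auto)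
        also have "\<dots> \<le> (3*B) * (1029*x*B^3)" using NB x1 B1 by (intro mult_right_mono) auto
        also have "\<dots> = 3087*x*B^4" by (simp add: power_numeral_reduce)
        finally show ?thesis .
      qed
      have SRB: "(\<Sum>i<N. real (Rr n i)) \<le> 1539*x*B^4"
      proof -
        have "(\<Sum>i<N. real (Rr n i)) \<le> real (card {..<N}) * (513*x*B)"
          by (rule sum_bounded_above) (use per in auto)
        also have "\<dots> \<le> (3*B) * (513*x*B)" using NB x1 B1 by (intro mult_right_mono) auto
        also have "\<dots> = 1539*x*B^2" by (simp add: power2_eq_square)
        also have "\<dots> \<le> 1539*x*B^4" using B4 x1 by simp
        finally show ?thesis .
      qed
      have bRB: "bR \<le> 18*B"
      proof -
        define S where "S = Tot + (\<Sum>i<N. Rr n i)"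
        have "real S + 2 \<le> 4628*x*B^4" using TotB SRB xB4 by (simp add: S_def of_nat_sum)
        also have "\<dots> \<le> 4628 * real n * (2*real n)^4"
          using xn B2n x1 B1 by (intro mult_mono power_mono) auto
        also have "\<dots> = 74048 * real n^5" by (simp add: power_mult_distrib power_numeral_reduce)
        also have "\<dots> \<le> 2^17 * real n^5" by simp
        finally have S2: "real S + 2 \<le> 2^17 * real n^5" .
        have "log 2 (real S + 2) \<le> log 2 (2^17 * real n^5)" using S2 n1 by (intro log_mono) auto
        also have "\<dots> = log 2 ((2::real)^17) + log 2 (real n^5)" using n1 by (intro log_mult_pos) auto
        also have "log 2 ((2::real)^17) = 17" by (subst log_nat_power) auto
        also have "log 2 (real n^5) = 5*L" using n1 by (subst log_nat_power) (auto simp: L_def)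
        finally have l: "log 2 (real S + 2) \<le> 17 + 5*L" .
        have "0 \<le> log 2 (real S + 2)" by simp
        then have "bR \<le> log 2 (real S + 2) + 1" unfolding bR_def bS_def S_def[symmetric] bst_op_cost_def by linarith
        then show ?thesis using l L0 by (simp add: B_def)
      qed
      have tm: "real (chunk_reps n \<Delta> i) * (5 + real (Rr n i) * (2 * real (Ln \<alpha> i) + 5 + 2 * bR)) + 2 \<le> P*x*B^4"
        if i: "i \<in> {..<N}" for i
      proof -
        define m where "m = real (chunk_reps n \<Delta> i)"
        define r where "r = real (Rr n i)"
        define Q where "Q = 2 * real (Ln \<alpha> i) + 5 + 2 * bR"
        have pi: "m \<le> 5*x*B^2" "m*r \<le> 1029*x*B^3" "real (Ln \<alpha> i) \<le> K*B" using per[of i] i by (auto simp: m_def r_def)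
        have Q0: "0 \<le> Q" unfolding Q_def bR_def by simp
        have QB: "Q \<le> (2*K+41)*B" using pi(3) bRB B1 unfolding Q_def by (simp add: algebra_simps)
        have "m*r*Q \<le> (1029*x*B^3) * ((2*K+41)*B)"
          using pi(2) QB Q0 x1 B1 by (intro mult_mono[of "m*r"]) (auto simp: m_def r_def)
        also have "\<dots> = 1029*(2*K+41)*x*B^4" by (simp add: power_numeral_reduce)
        finally have a: "m*r*Q \<le> 1029*(2*K+41)*x*B^4" .
        have "x*B^2 \<le> x*B^4" using B4 x1 by (intro mult_left_mono) auto
        then have b: "5*m \<le> 25*x*B^4" using pi(1) by linarith
        have "m * (5 + r*Q) + 2 = 5*m + m*r*Q + 2" by (simp add: algebra_simps)
        also have "\<dots> \<le> P*x*B^4" using a b xB4 unfolding P_def by (simp add: algebra_simps)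
        finally show ?thesis by (simp add: m_def r_def Q_def)
      qed
      have "(\<Sum>i<N. real (chunk_reps n \<Delta> i) * (5 + real (Rr n i) * (2 * real (Ln \<alpha> i) + 5 + 2 * bR)) + 2)
            \<le> real (card {..<N}) * (P*x*B^4)"
        by (rule sum_bounded_above) (rule tm)
      also have "\<dots> \<le> (3*B) * (P*x*B^4)" using NB x1 B1 K0 by (intro mult_right_mono) (auto simp: P_def)
      also have "\<dots> = 3*P*x*B^5" by (simp add: power_numeral_reduce)
      finally have s1: "(\<Sum>i<N. real (chunk_reps n \<Delta> i) * (5 + real (Rr n i) * (2 * real (Ln \<alpha> i) + 5 + 2 * bR)) + 2) \<le> 3*P*x*B^5" .
      have "real Tot * (2 + bR) \<le> (3087*x*B^4) * (20*B)"
        using TotB bRB B1 by (intro mult_mono) (auto simp: bR_def)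
      also have "\<dots> = 61740*x*B^5" by (simp add: power_numeral_reduce)
      finally have s2: "real Tot * (2 + bR) \<le> 61740*x*B^5" .
      have "real (running_time out n \<alpha> \<Delta> rs) \<le> (3*P + 61744)*x*B^5"
        by (rule fin_step[OF rt s1 s2 xB5])
      then show ?thesis by (simp add: x_def B_def L_def)
    qed
  qed
qed

end
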